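(* Consider the controlled impulsive system $\dot x(t)=Ax(t)+B_cu_c(t)$ for $t\ne t_k$, $x(t_k^+)=Jx(t_k)+B_du_d(t_k)$, with arbitrary real matrices $A,J\in\mathbb{R}^{n\times n}$, $B_c\in\mathbb{R}^{n\times m_c}$, $B_d\in\mathbb{R}^{n\times m_d}$. Assume there exist a diagonal matrix $X\in\mathbb{D}^n_{\succ0}$, matrices $U_c\in\mathbb{R}^{m_c\times n}$, $U_d\in\mathbb{R}^{m_d\times n}$ and a scalar $\alpha\in\mathbb{R}$ such that $AX+B_cU_c+\alpha I_n\ge0$, $JX+B_dU_d\ge0$, $(AX+B_cU_c)\mathbf{1}_n<0$ and $(JX+B_dU_d-X)\mathbf{1}_n<0$. Then, with $K_c=U_cX^{-1}$, $K_d=U_dX^{-1}$ and the state feedback $u_c(t)=K_cx(t)$, $u_d(t)=K_dx(t)$, the closed-loop system $\dot x=(A+B_cK_c)x$, $x(t_k^+)=(J+B_dK_d)x(t_k)$ is positive ($A+B_cK_c$ is Metzler and $J+B_dK_d$ is nonnegative) and asymptotically stable under arbitrary dwell-time.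
   Context: $\mathbb{D}^n_{\succ0}$ denotes the set of $n\times n$ diagonal matrices with positive diagonal entries. Matrix and vector inequalities are entrywise; $\mathbf{1}_n$ is the vector of ones. $x(t^+)=\lim_{s\downarrow t}x(s)$; impulse times are strictly increasing with $t_k\to\infty$. A matrix is Metzler if its off-diagonal entries are nonnegative. Asymptotic stability under arbitrary dwell-time means global asymptotic stability of the zero solution for every impulse sequence with $t_{k+1}-t_k\in(0,\infty)$. *)

theory Defs
  imports "HOL-Analysis.Analysis"
begin

text \<open>Matrices are rendered as \<open>real^'c^'r\<close> (r rows, c columns).\<close>

definition metzler :: "real^'n^'n \<Rightarrow> bool" where
  "metzler M \<longleftrightarrow> (\<forall>i j. i \<noteq> j \<longrightarrow> M $ i $ j \<ge> 0)"

definition nonneg_mat :: "real^'c^'r \<Rightarrow> bool" where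
  "nonneg_mat M \<longleftrightarrow> (\<forall>i j. M $ i $ j \<ge> 0)"

definition pos_diag :: "real^'n^'n \<Rightarrow> bool" where
  "pos_diag X \<longleftrightarrow> (\<forall>i j. i \<noteq> j \<longrightarrow> X $ i $ j = 0) \<and> (\<forall>i. X $ i $ i > 0)"

definition ones :: "real^'n" where
  "ones = (\<chi> i. 1)"

definition impulse_seq :: "(nat \<Rightarrow> real) \<Rightarrow> bool" where
  "impulse_seq tk \<longleftrightarrow> strict_mono tk \<and> tk 0 > 0 \<and> filterlim tk at_top sequentially"

definition impulsive_solution ::
  "real^'n^'n \<Rightarrow> real^'n^'n \<Rightarrow> (nat \<Rightarrow> real) \<Rightarrow> (real \<Rightarrow> real^'n) \<Rightarrow> bool" where
  "impulsive_solution A J tk x \<longleftrightarrow>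
     (\<forall>s. s \<ge> 0 \<longrightarrow> s \<notin> range tk \<longrightarrow>
          (x has_vector_derivative (A *v x s)) (at s within {0..})) \<and>
     (\<forall>k. (x \<longlongrightarrow> x (tk k)) (at_left (tk k))) \<and>
     (\<forall>k. (x \<longlongrightarrow> J *v x (tk k)) (at_right (tk k)))"

definition GAS_arbitrary_dwell :: "real^'n^'n \<Rightarrow> real^'n^'n \<Rightarrow> bool" where
  "GAS_arbitrary_dwell A J \<longleftrightarrow>
     (\<forall>tk. impulse_seq tk \<longrightarrow>
        (\<forall>\<epsilon>>0. \<exists>\<delta>>0. \<forall>x. impulsive_solution A J tk x \<longrightarrow> norm (x 0) < \<delta> \<longrightarrow>
              (\<forall>s\<ge>0. norm (x s) < \<epsilon>)) \<and>
        (\<forall>x. impulsive_solution A J tk x \<longrightarrow> (x \<longlongrightarrow> 0) at_top))"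

end

theory Submission
  imports Defs "HOL-Real_Asymp.Real_Asymp"
begin


lemma comp_deriv:
  fixes x :: "real \<Rightarrow> real^'n"
  shows "(x has_vector_derivative d) (at s) \<Longrightarrow> ((\<lambda>t. x t $ i) has_real_derivative d $ i) (at s)"
  using bounded_linear.has_vector_derivative[OF bounded_linear_vec_nth, of x d "at s" i]
  by (simp add: has_real_derivative_iff_has_vector_derivative)

lemma left_le:
  fixes f :: "real \<Rightarrow> real"
  assumes "(f \<longlongrightarrow> f c) (at_left c)" "a < c" "\<forall>t. a < t \<and> t < c \<longrightarrow> f t \<le> 0"
  shows "f c \<le> 0"
proof (rule tendsto_upperbound[OF assms(1)])
  show "\<forall>\<^sub>F t in at_left c. f t \<le> 0"
    unfolding eventually_at_left_field using assms(2,3) by blast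
qed (simp add: trivial_limit_at_left_real)

lemma row_ineq:
  fixes M :: "real^'n^'n"
  assumes metz: "\<forall>i j. i\<noteq>j \<longrightarrow> M$i$j \<ge> 0"
    and sig: "\<sigma> = 1 \<or> \<sigma> = -1" and eq: "\<sigma> * y$i = v$i * R"
    and le: "\<forall>j. \<bar>y$j\<bar> \<le> v$j * R"
  shows "\<sigma> * (M *v y)$i \<le> (M *v v)$i * R"
proof -
  have "\<sigma> * (M *v y)$i = (\<Sum>j\<in>UNIV. M$i$j * (\<sigma> * y$j))"
    by (simp add: matrix_vector_mult_def sum_distrib_left algebra_simps)
  also have "\<dots> \<le> (\<Sum>j\<in>UNIV. M$i$j * (v$j * R))"
  proof (rule sum_mono)
    fix j
    show "M$i$j * (\<sigma> * y$j) \<le> M$i$j * (v$j * R)"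
    proof (cases "j = i")
      case True thus ?thesis using eq by simp
    next
      case False
      have "\<sigma> * y$j \<le> \<bar>y$j\<bar>" using sig by auto
      also have "\<dots> \<le> v$j * R" using le by auto
      finally show ?thesis using metz False by (simp add: mult_left_mono)
    qed
  qed
  also have "\<dots> = (M *v v)$i * R"
    by (simp add: matrix_vector_mult_def sum_distrib_right sum_distrib_left mult_ac)
  finally show ?thesis .
qed

lemma jump_ineq:
  fixes N :: "real^'n^'n"
  assumes nn: "\<forall>i j. N$i$j \<ge> 0" and Nv: "\<forall>i. (N *v v)$i \<le> v$i"
    and le: "\<forall>j. \<bar>y$j\<bar> \<le> v$j * K" and K: "K \<ge> 0"
  shows "\<bar>(N *v y)$i\<bar> \<le> v$i * K"
proof -
  have "\<bar>(N *v y)$i\<bar> = \<bar>\<Sum>j\<in>UNIV. N$i$j * y$j\<bar>" by (simp add: matrix_vector_mult_def)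
  also have "\<dots> \<le> (\<Sum>j\<in>UNIV. \<bar>N$i$j * y$j\<bar>)" by (rule sum_abs)
  also have "\<dots> \<le> (\<Sum>j\<in>UNIV. N$i$j * (v$j * K))"
    apply (rule sum_mono) using nn le by (simp add: abs_mult mult_left_mono)
  also have "\<dots> = (N *v v)$i * K"
    by (simp add: matrix_vector_mult_def sum_distrib_right sum_distrib_left mult_ac)
  also have "\<dots> \<le> v$i * K" using Nv K by (simp add: mult_right_mono)
  finally show ?thesis .
qed

lemma interval_bound:
  fixes M :: "real^'n^'n" and x :: "real \<Rightarrow> real^'n" and v ya :: "real^'n"
  assumes metz: "\<forall>i j. i\<noteq>j \<longrightarrow> M$i$j \<ge> 0" and vpos: "\<forall>i. v$i > 0"
    and gpos: "\<gamma> > 0" and gam: "\<forall>i. (M *v v)$i < -\<gamma> * v$i"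
    and ab: "a < b"
    and der: "\<forall>s. a<s \<and> s<b \<longrightarrow> (x has_vector_derivative (M *v x s)) (at s)"
    and lima: "(x \<longlongrightarrow> ya) (at_right a)" and limb: "(x \<longlongrightarrow> x b) (at_left b)"
    and K: "K \<ge> 0" "\<forall>i. \<bar>ya$i\<bar> \<le> v$i*K"
  shows "\<forall>t. a<t \<and> t\<le>b \<longrightarrow> (\<forall>i. \<bar>x t $ i\<bar> \<le> v$i * K * exp(-\<gamma>*(t-a)))"
proof -
  have cont: "isCont x s" if "a<s" "s<b" for s
    using der that has_vector_derivative_continuous by blast
  have strict: "\<bar>x t $ i\<bar> < v$i * K' * exp(-\<gamma>*(t-a))"
    if K': "K' > K" and t: "a<t" "t<b" for K' t i
  proof (rule ccontr)
    assume nt: "\<not> ?thesis"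
    define R where "R = (\<lambda>t. K' * exp(-\<gamma>*(t-a)))"
    have Rpos: "R s > 0" for s using K' K unfolding R_def by simp
    define S where "S = {s. a < s \<and> s \<le> t \<and> (\<exists>j. \<bar>x s $ j\<bar> \<ge> v$j * R s)}"
    have tS: "t \<in> S" using nt t unfolding S_def R_def by (auto simp: not_less mult.assoc)
    have bdd: "bdd_below S" unfolding S_def by (rule bdd_belowI[of _ a]) auto
    define ts where "ts = Inf S"
    have ts_le: "ts \<le> s" if "s \<in> S" for s using cInf_lower[OF that bdd] ts_def by simp
    have ev: "\<forall>\<^sub>F s in at_right a. \<forall>j. \<bar>x s $ j\<bar> - v$j * R s < 0"
    proof (rule eventually_all_finite)
      fix j
      have "((\<lambda>s. \<bar>x s $ j\<bar> - v$j * R s) \<longlongrightarrow> \<bar>ya $ j\<bar> - v$j * (K' * exp(-\<gamma>*(a-a)))) (at_right a)"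
        unfolding R_def by (intro tendsto_intros lima)
      moreover have "\<bar>ya $ j\<bar> - v$j * (K' * exp(-\<gamma>*(a-a))) < 0"
      proof -
        have "v$j * K < v$j * K'" using K' vpos[rule_format, of j] by simp
        thus ?thesis using K(2)[rule_format, of j] by simp
      qed
      ultimately show "\<forall>\<^sub>F s in at_right a. \<bar>x s $ j\<bar> - v$j * R s < 0" by (rule order_tendstoD)
    qed
    then obtain c where c: "c > a" "\<forall>s>a. s < c \<longrightarrow> (\<forall>j. \<bar>x s $ j\<bar> - v$j * R s < 0)"
      unfolding eventually_at_right_field by blast
    have "c \<le> ts" unfolding ts_def
    proof (rule cInf_greatest)
      show "S \<noteq> {}" using tS by blast
      fix s assume sS: "s \<in> S" show "c \<le> s"
      proof (rule ccontr)
        assume "\<not> c \<le> s"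
        then have all: "\<forall>j. \<bar>x s $ j\<bar> - v$j * R s < 0" using c sS unfolding S_def by auto
        from sS obtain j where "v$j * R s \<le> \<bar>x s $ j\<bar>" unfolding S_def by blast
        with all[rule_format, of j] show False by linarith
      qed
    qed
    hence tsa: "a < ts" using c by simp
    have tst: "ts \<le> t" using ts_le tS by simp
    hence tsb: "ts < b" using t by simp
    have below: "\<forall>j. \<bar>x s $ j\<bar> < v$j * R s" if "a < s" "s < ts" for s
    proof (rule allI, rule ccontr)
      fix j assume "\<not> \<bar>x s $ j\<bar> < v$j * R s"
      then have "s \<in> S" using that tst unfolding S_def by (auto simp: not_less)
      then show False using ts_le[of s] that by simp
    qed
    have contf: "isCont (\<lambda>s. \<bar>x s $ j\<bar> - v$j * R s) ts" for j
      unfolding R_def using cont[OF tsa tsb] by (intro continuous_intros) auto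
    have tlf: "((\<lambda>s. \<bar>x s $ j\<bar> - v$j * R s) \<longlongrightarrow> \<bar>x ts $ j\<bar> - v$j * R ts) (at_left ts)" for j
    proof -
      have "((\<lambda>s. \<bar>x s $ j\<bar> - v$j * R s) \<longlongrightarrow> \<bar>x ts $ j\<bar> - v$j * R ts) (at ts)"
        using contf[of j] by (simp add: isCont_def)
      then show ?thesis by (simp add: filterlim_at_split)
    qed
    have le_ts: "\<bar>x ts $ j\<bar> - v$j*R ts \<le> 0" for j
      using left_le[OF tlf tsa] below by (smt (verit))
    have "\<exists>i. \<bar>x ts $ i\<bar> - v$i*R ts = 0"
    proof (rule ccontr)
      assume "\<not> ?thesis" then have lt: "\<forall>j. \<bar>x ts $ j\<bar> - v$j*R ts < 0"
        using le_ts by (meson order_le_less)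
      have "\<forall>\<^sub>F s in at ts. \<forall>j. \<bar>x s $ j\<bar> - v$j * R s < 0"
      proof (rule eventually_all_finite)
        fix j show "\<forall>\<^sub>F s in at ts. \<bar>x s $ j\<bar> - v$j * R s < 0"
          using contf[of j] lt by (metis isCont_def order_tendstoD(2))
      qed
      then obtain d where d: "d>0" "\<forall>s. s \<noteq> ts \<and> dist s ts < d \<longrightarrow> (\<forall>j. \<bar>x s $ j\<bar> - v$j * R s < 0)"
        unfolding eventually_at by blast
      have "ts + d \<le> ts" unfolding ts_def
      proof (rule cInf_greatest)
        show "S \<noteq> {}" using tS by blast
        fix s assume sS: "s \<in> S"
        show "Inf S + d \<le> s"
        proof (rule ccontr)
          assume "\<not> ?thesis"
          hence "s < ts + d" using ts_def by simp
          moreover have "ts \<le> s" using ts_le sS .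
          ultimately have "\<forall>j. \<bar>x s $ j\<bar> - v$j * R s < 0"
          proof (cases "s = ts")
            case True thus ?thesis using lt by simp
          next
            case False
            have "dist s ts < d" using \<open>s < ts + d\<close> \<open>ts \<le> s\<close> by (simp add: dist_real_def)
            thus ?thesis using d(2) False by blast
          qed
          note all = this
          from sS obtain j where "v$j * R s \<le> \<bar>x s $ j\<bar>" unfolding S_def by blast
          with all[rule_format, of j] show False by linarith
        qed
      qed
      thus False using d by simp
    qed
    then obtain i0 where i0: "\<bar>x ts $ i0\<bar> = v$i0 * R ts" by auto
    define \<sigma> where "\<sigma> = (if x ts $ i0 \<ge> 0 then 1 else -1::real)"
    have sig: "\<sigma> = 1 \<or> \<sigma> = -1" by (simp add: \<sigma>_def)
    have seq: "\<sigma> * x ts $ i0 = v$i0 * R ts" using i0 by (auto simp: \<sigma>_def)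
    have row: "\<sigma> * (M *v x ts)$i0 \<le> (M *v v)$i0 * R ts"
      by (rule row_ineq[OF metz sig seq]) (use le_ts in auto)
    define h where "h = (\<lambda>s. \<sigma> * x s $ i0 - v$i0 * R s)"
    have d1: "((\<lambda>s. x s $ i0) has_real_derivative (M *v x ts)$i0) (at ts)"
      using comp_deriv der tsa tsb by blast
    have dh: "(h has_real_derivative (\<sigma> * (M *v x ts)$i0 + v$i0 * \<gamma> * R ts)) (at ts)"
      unfolding h_def R_def by (auto intro!: derivative_eq_intros d1)
    have neg: "\<sigma> * (M *v x ts)$i0 + v$i0 * \<gamma> * R ts < 0"
    proof -
      have "(M *v v)$i0 * R ts < (-\<gamma> * v$i0) * R ts"
        using mult_strict_right_mono[OF gam[rule_format, of i0] Rpos[of ts]] .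
      thus ?thesis using row by (simp add: algebra_simps)
    qed
    obtain d where d: "d > 0" "\<forall>hh>0. hh < d \<longrightarrow> h ts < h (ts - hh)"
      using DERIV_neg_dec_left[OF dh neg] by blast
    define hh where "hh = min d (ts - a) / 2"
    have hh: "hh > 0" "hh < d" "a < ts - hh" using d tsa unfolding hh_def min_def by (auto simp: field_simps)
    have "h ts < h (ts - hh)" using d hh by auto
    moreover have "h ts = 0" using seq h_def by simp
    moreover have "\<bar>x (ts-hh) $ i0\<bar> < v$i0 * R (ts-hh)" using below[of "ts-hh"] hh by auto
    moreover have "\<sigma> * x (ts-hh) $ i0 \<le> \<bar>x (ts-hh) $ i0\<bar>" using sig by auto
    ultimately show False unfolding h_def by auto
  qed
  show ?thesis
  proof (intro allI impI)
    fix t i assume t: "a < t \<and> t \<le> b"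
    have inner: "\<bar>x s $ i\<bar> \<le> v$i*K*exp(-\<gamma>*(s-a))" if "a<s" "s<b" for s
    proof (rule field_le_epsilon)
      fix e :: real assume e: "0<e"
      define K' where "K' = K + e / (v$i * exp(-\<gamma>*(s-a)))"
      have "K' > K" using e vpos by (simp add: K'_def)
      from strict[OF this that] have "\<bar>x s $ i\<bar> < v$i*K'*exp(-\<gamma>*(s-a))" .
      also have "v$i*K'*exp(-\<gamma>*(s-a)) = v$i*K*exp(-\<gamma>*(s-a)) + e"
        using vpos[rule_format, of i] unfolding K'_def by (simp add: field_simps)
      finally show "\<bar>x s $ i\<bar> \<le> v$i*K*exp(-\<gamma>*(s-a)) + e" by simp
    qed
    show "\<bar>x t $ i\<bar> \<le> v$i*K*exp(-\<gamma>*(t-a))"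
    proof (cases "t < b")
      case True thus ?thesis using inner t by auto
    next
      case False hence tb: "t = b" using t by simp
      have "((\<lambda>s. \<bar>x s $ i\<bar> - v$i*K*exp(-\<gamma>*(s-a))) \<longlongrightarrow> \<bar>x b $ i\<bar> - v$i*K*exp(-\<gamma>*(b-a))) (at_left b)"
        by (intro tendsto_intros limb)
      then have "\<bar>x b $ i\<bar> - v$i*K*exp(-\<gamma>*(b-a)) \<le> 0"
        by (rule left_le[where a=a]) (use ab inner in auto)
      thus ?thesis using tb by simp
    qed
  qed
qed

lemma solution_bound:
  fixes M N :: "real^'n^'n" and v :: "real^'n" and x :: "real \<Rightarrow> real^'n"
  assumes metz: "\<forall>i j. i\<noteq>j \<longrightarrow> M$i$j \<ge> 0" and vpos: "\<forall>i. v$i > 0"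
    and gpos: "\<gamma> > 0" and gam: "\<forall>i. (M *v v)$i < -\<gamma> * v$i"
    and nn: "\<forall>i j. N$i$j \<ge> 0" and Nv: "\<forall>i. (N *v v)$i \<le> v$i"
    and tk: "impulse_seq tk" and sol: "impulsive_solution M N tk x"
    and K0: "K0 \<ge> 0" "\<forall>i. \<bar>x 0 $ i\<bar> \<le> v$i*K0"
  shows "\<forall>t\<ge>0. \<forall>i. \<bar>x t $ i\<bar> \<le> v$i * K0 * exp(-\<gamma>*t)"
proof -
  have sm: "strict_mono tk" and tk0: "tk 0 > 0" and tkinf: "filterlim tk at_top sequentially"
    using tk unfolding impulse_seq_def by auto
  have derw: "\<And>s. s \<ge> 0 \<Longrightarrow> s \<notin> range tk \<Longrightarrow> (x has_vector_derivative (M *v x s)) (at s within {0..})"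
    and lleft: "\<And>k. (x \<longlongrightarrow> x (tk k)) (at_left (tk k))"
    and lright: "\<And>k. (x \<longlongrightarrow> N *v x (tk k)) (at_right (tk k))"
    using sol unfolding impulsive_solution_def by auto
  have derat: "(x has_vector_derivative (M *v x s)) (at s)" if "s > 0" "s \<notin> range tk" for s
  proof -
    have "(x has_vector_derivative (M *v x s)) (at s within {0<..})"
      by (rule has_vector_derivative_within_subset[OF derw]) (use that in auto)
    thus ?thesis using at_within_open[of s "{0<..}"] that by simp
  qed
  have nr0: "s \<notin> range tk" if "s < tk 0" for s
  proof
    assume "s \<in> range tk" then obtain m where "s = tk m" by auto
    moreover have "tk 0 \<le> tk m" using strict_mono_less_eq[OF sm] by simp
    ultimately show False using that by simp
  qed
  have nrk: "s \<notin> range tk" if "tk k < s" "s < tk (Suc k)" for s k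
  proof
    assume "s \<in> range tk" then obtain m where m: "s = tk m" by auto
    have "k < m" using that(1) m strict_mono_less[OF sm] by simp
    moreover have "m < Suc k" using that(2) m strict_mono_less[OF sm] by simp
    ultimately show False by simp
  qed
  have lim0: "(x \<longlongrightarrow> x 0) (at_right 0)"
  proof -
    have "0 \<notin> range tk" using nr0 tk0 by simp
    hence "continuous (at 0 within {0..}) x" using derw has_vector_derivative_continuous by blast
    hence "(x \<longlongrightarrow> x 0) (at 0 within {0..})" by (simp add: continuous_within)
    thus ?thesis by (rule tendsto_within_subset) auto
  qed
  have B0: "\<forall>t. 0<t \<and> t\<le>tk 0 \<longrightarrow> (\<forall>i. \<bar>x t $ i\<bar> \<le> v$i * K0 * exp(-\<gamma>*(t-0)))"
  proof (rule interval_bound[OF metz vpos gpos gam tk0 _ lim0 lleft K0])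
    show "\<forall>s. 0<s \<and> s<tk 0 \<longrightarrow> (x has_vector_derivative (M *v x s)) (at s)"
      using derat nr0 by blast
  qed
  have step: "\<forall>t. tk k<t \<and> t\<le>tk (Suc k) \<longrightarrow> (\<forall>i. \<bar>x t $ i\<bar> \<le> v$i * K0 * exp(-\<gamma>*t))"
    if Pk: "\<forall>i. \<bar>x (tk k) $ i\<bar> \<le> v$i * K0 * exp(-\<gamma>*tk k)" for k
  proof -
    have ab: "tk k < tk (Suc k)" using strict_mono_less[OF sm] by simp
    have K: "K0 * exp(-\<gamma>*tk k) \<ge> 0" using K0 by simp
    have Kb: "\<forall>i. \<bar>(N *v x (tk k))$i\<bar> \<le> v$i*(K0 * exp(-\<gamma>*tk k))"
      using jump_ineq[OF nn Nv _ K] Pk by (simp add: mult.assoc)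
    have tk0k: "0 < tk k" using tk0 strict_mono_less_eq[OF sm, of 0 k] by simp
    have "\<forall>t. tk k<t \<and> t\<le>tk (Suc k) \<longrightarrow> (\<forall>i. \<bar>x t $ i\<bar> \<le> v$i * (K0 * exp(-\<gamma>*tk k)) * exp(-\<gamma>*(t - tk k)))"
    proof (rule interval_bound[OF metz vpos gpos gam ab _ lright lleft K Kb])
      show "\<forall>s. tk k<s \<and> s<tk (Suc k) \<longrightarrow> (x has_vector_derivative (M *v x s)) (at s)"
        using derat nrk tk0k by (meson order_less_trans)
    qed
    moreover have eq: "v$i * (K0 * exp(-\<gamma>*tk k)) * exp(-\<gamma>*(t - tk k)) = v$i * K0 * exp(-\<gamma>*t)" for i t
    proof -
      have "exp(-\<gamma>*tk k) * exp(-\<gamma>*(t - tk k)) = exp(-\<gamma>*t)"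
        by (simp add: exp_add[symmetric] right_diff_distrib)
      thus ?thesis by (metis mult.assoc)
    qed
    ultimately show ?thesis by (simp only: eq)
  qed
  have P: "\<forall>i. \<bar>x (tk k) $ i\<bar> \<le> v$i * K0 * exp(-\<gamma>*tk k)" for k
  proof (induction k)
    case 0 then show ?case using B0 tk0 by simp
  next
    case (Suc k) then show ?case using step[OF Suc] strict_mono_less[OF sm, of k "Suc k"] by simp
  qed
  show ?thesis
  proof (intro allI impI)
    fix t :: real and i assume t: "t \<ge> 0"
    show "\<bar>x t $ i\<bar> \<le> v$i * K0 * exp(-\<gamma>*t)"
    proof (cases "t \<le> tk 0")
      case True
      show ?thesis
      proof (cases "t = 0")
        case True thus ?thesis using K0 by simp
      next
        case False thus ?thesis using B0 t \<open>t \<le> tk 0\<close> by simp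
      qed
    next
      case False
      obtain m where m: "t \<le> tk m"
        using tkinf unfolding filterlim_at_top eventually_sequentially by blast
      define m0 where "m0 = (LEAST m. t \<le> tk m)"
      have m0: "t \<le> tk m0" unfolding m0_def by (rule LeastI[of _ m]) (rule m)
      have "m0 \<noteq> 0" proof assume "m0 = 0" thus False using m0 False by simp qed
      then obtain k where k: "m0 = Suc k" using not0_implies_Suc by blast
      have "\<not> t \<le> tk k" unfolding m0_def
        using not_less_Least[of k "\<lambda>m. t \<le> tk m"] k m0_def by simp
      thus ?thesis using step[OF P[of k]] m0 k by simp
    qed
  qed
qed

lemma finmin:
  fixes f :: "'n::finite \<Rightarrow> real"
  assumes "\<forall>i. f i > 0"
  shows "\<exists>c>0. \<forall>i. c \<le> f i"
proof (intro exI conjI allI)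
  show "Min (range f) > 0" using assms Min_in[of "range f"] by auto
  fix i show "Min (range f) \<le> f i" by simp
qed

lemma core_gas:
  fixes M N :: "real^'n^'n" and v :: "real^'n"
  assumes metz: "\<forall>i j. i\<noteq>j \<longrightarrow> M$i$j \<ge> 0" and vpos: "\<forall>i. v$i > 0"
    and Mv: "\<forall>i. (M *v v)$i < 0"
    and nn: "\<forall>i j. N$i$j \<ge> 0" and Nv: "\<forall>i. (N *v v)$i \<le> v$i"
  shows "GAS_arbitrary_dwell M N"
proof -
  have "\<forall>i. -(M *v v)$i / v$i > 0" using Mv vpos by (simp add: divide_neg_pos)
  then obtain c where c: "c>0" "\<forall>i. c \<le> -(M *v v)$i / v$i"
    using finmin[of "\<lambda>i. -(M *v v)$i / v$i"] by blast
  define \<gamma> where "\<gamma> = c/2"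
  have gpos: "\<gamma> > 0" using c by (simp add: \<gamma>_def)
  have gam: "\<forall>i. (M *v v)$i < -\<gamma> * v$i"
  proof
    fix i
    have "c * v$i \<le> (-(M *v v)$i / v$i) * v$i"
      by (rule mult_right_mono[OF c(2)[rule_format, of i]]) (use vpos[rule_format, of i] in simp)
    also have "\<dots> = -(M *v v)$i" using vpos[rule_format, of i] by simp
    finally have "c * v$i \<le> -(M *v v)$i" .
    moreover have "\<gamma> * v$i < c * v$i" using c(1) vpos[rule_format, of i] by (simp add: \<gamma>_def)
    ultimately show "(M *v v)$i < -\<gamma> * v$i" by simp
  qed
  obtain m where m: "m>0" "\<forall>i. m \<le> v$i" using finmin[of "\<lambda>i. v$i"] vpos by auto
  define S where "S = (\<Sum>i\<in>UNIV. v$i)"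
  have Spos: "S > 0" unfolding S_def using vpos by (simp add: sum_pos)
  have bound: "norm (x t) \<le> S/m * norm (x 0) * exp(-\<gamma>*t)"
    if tk: "impulse_seq tk" and sol: "impulsive_solution M N tk x" and t: "t \<ge> 0" for tk x t
  proof -
    define K0 where "K0 = norm (x 0) / m"
    have K0: "K0 \<ge> 0" using m by (simp add: K0_def)
    have Kb: "\<forall>i. \<bar>x 0 $ i\<bar> \<le> v$i*K0"
    proof
      fix i
      have "\<bar>x 0 $ i\<bar> \<le> norm (x 0)" by (rule component_le_norm_cart)
      also have "\<dots> = m * K0" using m by (simp add: K0_def)
      also have "\<dots> \<le> v$i * K0" using m K0 by (simp add: mult_right_mono)
      finally show "\<bar>x 0 $ i\<bar> \<le> v$i*K0" .
    qed
    have B: "\<forall>i. \<bar>x t $ i\<bar> \<le> v$i * K0 * exp(-\<gamma>*t)"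
      using solution_bound[OF metz vpos gpos gam nn Nv tk sol K0 Kb] t by blast
    have "norm (x t) \<le> (\<Sum>i\<in>UNIV. \<bar>x t $ i\<bar>)" by (rule norm_le_l1_cart)
    also have "\<dots> \<le> (\<Sum>i\<in>UNIV. v$i * K0 * exp(-\<gamma>*t))" by (rule sum_mono) (use B in auto)
    also have "\<dots> = S * K0 * exp(-\<gamma>*t)" unfolding S_def by (simp add: sum_distrib_right)
    also have "\<dots> = S/m * norm (x 0) * exp(-\<gamma>*t)" by (simp add: K0_def)
    finally show ?thesis .
  qed
  show ?thesis unfolding GAS_arbitrary_dwell_def
  proof (rule allI, rule impI, rule conjI)
    fix tk :: "nat \<Rightarrow> real" assume tk: "impulse_seq tk"
    show "\<forall>\<epsilon>>0. \<exists>\<delta>>0. \<forall>x. impulsive_solution M N tk x \<longrightarrow> norm (x 0) < \<delta> \<longrightarrow> (\<forall>s\<ge>0. norm (x s) < \<epsilon>)"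
    proof (intro allI impI)
      fix \<epsilon> :: real assume e: "\<epsilon> > 0"
      show "\<exists>\<delta>>0. \<forall>x. impulsive_solution M N tk x \<longrightarrow> norm (x 0) < \<delta> \<longrightarrow> (\<forall>s\<ge>0. norm (x s) < \<epsilon>)"
      proof (intro exI[of _ "\<epsilon> * m / S"] conjI allI impI)
        show "\<epsilon> * m / S > 0" using e m Spos by simp
        fix x u assume sol: "impulsive_solution M N tk x" and x0: "norm (x 0) < \<epsilon> * m / S" and s: "u \<ge> (0::real)"
        have "norm (x u) \<le> S/m * norm (x 0) * exp(-\<gamma>*u)" by (rule bound[OF tk sol s])
        also have "\<dots> \<le> S/m * norm (x 0)"
        proof -
          have "exp(-\<gamma>*u) \<le> 1" using gpos s by simp
          moreover have "S/m * norm (x 0) \<ge> 0" using m Spos by simp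
          ultimately show ?thesis using mult_left_mono[of "exp(-\<gamma>*u)" 1 "S/m * norm (x 0)"] by simp
        qed
        also have "\<dots> < S/m * (\<epsilon> * m / S)"
          by (rule mult_strict_left_mono[OF x0]) (use m Spos in simp)
        also have "\<dots> = \<epsilon>" using m Spos by simp
        finally show "norm (x u) < \<epsilon>" .
      qed
    qed
    show "\<forall>x. impulsive_solution M N tk x \<longrightarrow> (x \<longlongrightarrow> 0) at_top"
    proof (intro allI impI)
      fix x assume sol: "impulsive_solution M N tk x"
      show "(x \<longlongrightarrow> 0) at_top"
      proof (rule Lim_null_comparison)
        show "\<forall>\<^sub>F t in at_top. norm (x t) \<le> S/m * norm (x 0) * exp(-\<gamma>*t)"
          using eventually_ge_at_top[of "0::real"] by eventually_elim (rule bound[OF tk sol])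
        show "((\<lambda>t. S/m * norm (x 0) * exp(-\<gamma>*t)) \<longlongrightarrow> 0) at_top"
          using gpos by real_asymp
      qed
    qed
  qed
qed

lemma mat_add_rdistrib: "((A::real^'n^'m) + B) ** C = A ** C + B ** C"
  by (vector matrix_matrix_mult_def sum.distrib[symmetric] field_simps)

lemma diag_mult_right:
  fixes P :: "real^'n^'m" and X :: "real^'n^'n"
  shows "(P ** (\<chi> i j. if i = j then 1 / X$i$i else 0))$i$j = P$i$j / X$j$j"
proof -
  have "(P ** (\<chi> i j. if i = j then 1 / X$i$i else 0))$i$j
      = (\<Sum>k\<in>UNIV. if k = j then P$i$j / X$j$j else 0)"
    unfolding matrix_matrix_mult_def by (simp only: vec_lambda_beta) (rule sum.cong; auto)
  also have "\<dots> = P$i$j / X$j$j" by simp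
  finally show ?thesis .
qed

lemma diag_ones:
  fixes X :: "real^'n^'n"
  assumes "\<forall>i j. i \<noteq> j \<longrightarrow> X $ i $ j = 0"
  shows "(X *v ones)$i = X$i$i"
proof -
  have "(X *v ones)$i = (\<Sum>k\<in>UNIV. if k = i then X$i$i else 0)"
    unfolding matrix_vector_mult_def ones_def using assms by (simp only: vec_lambda_beta) (rule sum.cong; auto)
  also have "\<dots> = X$i$i" by simp
  finally show ?thesis .
qed

theorem theorem6:
  fixes A J X :: "real^'n^'n"
    and Bc :: "real^'mc^'n" and Uc :: "real^'n^'mc"
    and Bd :: "real^'md^'n" and Ud :: "real^'n^'md"
    and \<alpha> :: real
  assumes "pos_diag X"
    and "nonneg_mat (A ** X + Bc ** Uc + \<alpha> *\<^sub>R mat 1)"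
    and "nonneg_mat (J ** X + Bd ** Ud)"
    and "\<forall>i. ((A ** X + Bc ** Uc) *v ones) $ i < 0"
    and "\<forall>i. ((J ** X + Bd ** Ud - X) *v ones) $ i < 0"
  shows "metzler (A + Bc ** (Uc ** matrix_inv X))
       \<and> nonneg_mat (J + Bd ** (Ud ** matrix_inv X))
       \<and> GAS_arbitrary_dwell (A + Bc ** (Uc ** matrix_inv X)) (J + Bd ** (Ud ** matrix_inv X))"
proof -
  have off: "\<forall>i j. i \<noteq> j \<longrightarrow> X $ i $ j = 0" and dpos: "\<forall>i. X $ i $ i > 0"
    using assms(1) unfolding pos_diag_def by auto
  have dnz: "\<forall>i. X $ i $ i \<noteq> 0" using dpos by (metis less_irrefl)
  define D :: "real^'n^'n" where "D = (\<chi> i j. if i = j then 1 / X$i$i else 0)"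
  have XD: "X ** D = mat 1"
  proof -
    have "(X ** D)$i$j = (mat 1 :: real^'n^'n)$i$j" for i j
    proof -
      have "(X ** D)$i$j = (\<Sum>k\<in>UNIV. if k = i then (if i = j then 1 else 0) else 0)"
        unfolding matrix_matrix_mult_def D_def using off dnz
        by (simp only: vec_lambda_beta) (rule sum.cong; auto)
      thus ?thesis by (simp add: mat_def)
    qed
    thus ?thesis by (simp add: vec_eq_iff)
  qed
  have DX: "D ** X = mat 1"
  proof -
    have "(D ** X)$i$j = (mat 1 :: real^'n^'n)$i$j" for i j
    proof -
      have "(D ** X)$i$j = (\<Sum>k\<in>UNIV. if k = i then (if i = j then 1 else 0) else 0)"
        unfolding matrix_matrix_mult_def D_def using off dnz
        by (simp only: vec_lambda_beta) (rule sum.cong; auto)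
      thus ?thesis by (simp add: mat_def)
    qed
    thus ?thesis by (simp add: vec_eq_iff)
  qed
  define Xi where "Xi = matrix_inv X"
  have "X ** Xi = mat 1 \<and> Xi ** X = mat 1"
    unfolding Xi_def matrix_inv_def by (rule someI[of _ D]) (use XD DX in simp)
  hence XiX: "Xi ** X = mat 1" by simp
  have XiD: "Xi = D"
  proof -
    have "Xi = Xi ** (X ** D)" using XD by simp
    also have "\<dots> = D" by (simp add: matrix_mul_assoc XiX)
    finally show ?thesis .
  qed
  define P where "P = A ** X + Bc ** Uc"
  define Q where "Q = J ** X + Bd ** Ud"
  define M where "M = A + Bc ** (Uc ** matrix_inv X)"
  define N where "N = J + Bd ** (Ud ** matrix_inv X)"
  have MP: "M = P ** D"
    unfolding M_def P_def mat_add_rdistrib Xi_def[symmetric] XiD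
    by (simp add: matrix_mul_assoc[symmetric] XD)
  have NQ: "N = Q ** D"
    unfolding N_def Q_def mat_add_rdistrib Xi_def[symmetric] XiD
    by (simp add: matrix_mul_assoc[symmetric] XD)
  have Ment: "M$i$j = P$i$j / X$j$j" for i j unfolding MP D_def by (rule diag_mult_right)
  have Nent: "N$i$j = Q$i$j / X$j$j" for i j unfolding NQ D_def by (rule diag_mult_right)
  define v where "v = X *v ones"
  have vpos: "\<forall>i. v$i > 0" using diag_ones[OF off] dpos by (simp add: v_def)
  have metz: "\<forall>i j. i\<noteq>j \<longrightarrow> M$i$j \<ge> 0"
  proof (intro allI impI)
    fix i j :: 'n assume ij: "i \<noteq> j"
    have "(P + \<alpha> *\<^sub>R mat 1)$i$j \<ge> 0" using assms(2) unfolding nonneg_mat_def P_def by blast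
    hence "P$i$j \<ge> 0" using ij by (simp add: mat_def)
    thus "M$i$j \<ge> 0" using Ment dpos[rule_format, of j] by simp
  qed
  have nn: "\<forall>i j. N$i$j \<ge> 0"
    using assms(3) Nent dpos unfolding nonneg_mat_def Q_def[symmetric]
    by (metis divide_nonneg_pos)
  have Mv: "\<forall>i. (M *v v)$i < 0"
  proof
    fix i
    have "M *v v = P *v ones" unfolding MP v_def
      by (simp add: matrix_vector_mul_assoc matrix_mul_assoc[symmetric] DX)
    thus "(M *v v)$i < 0" using assms(4) unfolding P_def by simp
  qed
  have Nv: "\<forall>i. (N *v v)$i \<le> v$i"
  proof
    fix i
    have "N *v v = Q *v ones" unfolding NQ v_def
      by (simp add: matrix_vector_mul_assoc matrix_mul_assoc[symmetric] DX)
    moreover have "((Q - X) *v ones)$i < 0" using assms(5) unfolding Q_def by simp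
    ultimately show "(N *v v)$i \<le> v$i"
      unfolding v_def by (simp add: matrix_vector_mult_diff_rdistrib)
  qed
  have "metzler M" unfolding metzler_def using metz by blast
  moreover have "nonneg_mat N" unfolding nonneg_mat_def using nn by blast
  moreover have "GAS_arbitrary_dwell M N" by (rule core_gas[OF metz vpos Mv nn Nv])
  ultimately show ?thesis unfolding M_def N_def by blast
qed

end
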